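(* Let $N$ be a finite set and $f: 2^{N} \to \mathbb{R} \cup \{-\infty\}$ an M$^\natural$-concave function. For any $X, Y \in \arg\max f$ and any $I \subseteq X \setminus Y$, there exists $J \subseteq Y \setminus X$ such that $(X \setminus I) \cup J \in \arg\max f$ and $(Y \setminus J) \cup I \in \arg\max f$.
   Context: $\arg\max f$ denotes the set of maximizers of $f$ over $2^N$. For $f: 2^N \to \mathbb{R}\cup\{-\infty\}$, $\mathrm{dom}\, f = \{X \subseteq N : f(X) > -\infty\}$. Notation: $X - i = X \setminus \{i\}$, $Y + i = Y \cup \{i\}$, $X - i + j = (X\setminus\{i\})\cup\{j\}$, $Y + i - j = (Y \cup\{i\})\setminus\{j\}$. Conventions: $(-\infty)+a = a+(-\infty) = (-\infty)+(-\infty) = -\infty$ for $a \in \mathbb{R}$, $-\infty \le -\infty$, and a maximum over an empty set is $-\infty$. A function $f: 2^N \to \mathbb{R}\cup\{-\infty\}$ with $\mathrm{dom}\, f \neq \emptyset$ is M$^\natural$-concave if for all $X, Y \subseteq N$ and $i \in X \setminus Y$: $$f(X)+f(Y) \le \max\Big[ f(X-i)+f(Y+i),\ \max_{j \in Y\setminus X}\{ f(X-i+j)+f(Y+i-j)\}\Big].$$ *)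

theory Defs
  imports "HOL-Library.Extended_Real"
begin

(* f : 2^N -> R u {-oo} is modelled as f :: 'a set => ereal, considered on subsets of N,
   with values never +oo. *)

definition valued_on :: "'a set \<Rightarrow> ('a set \<Rightarrow> ereal) \<Rightarrow> bool" where
  "valued_on N f \<longleftrightarrow> (\<forall>X. X \<subseteq> N \<longrightarrow> f X \<noteq> \<infinity>)"

definition dom_f :: "'a set \<Rightarrow> ('a set \<Rightarrow> ereal) \<Rightarrow> 'a set set" where
  "dom_f N f = {X. X \<subseteq> N \<and> f X > -\<infinity>}"

(* maximum over an empty set is -oo: realised by Sup in ereal (Sup {} = -oo) *)
definition M_nat_concave :: "'a set \<Rightarrow> ('a set \<Rightarrow> ereal) \<Rightarrow> bool" where
  "M_nat_concave N f \<longleftrightarrow> valued_on N f \<and> dom_f N f \<noteq> {} \<and>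
     (\<forall>X Y i. X \<subseteq> N \<longrightarrow> Y \<subseteq> N \<longrightarrow> i \<in> X - Y \<longrightarrow>
        f X + f Y \<le> max (f (X - {i}) + f (insert i Y))
          (Sup ((\<lambda>j. f (insert j (X - {i})) + f (insert i Y - {j})) ` (Y - X))))"

definition argmax_f :: "'a set \<Rightarrow> ('a set \<Rightarrow> ereal) \<Rightarrow> 'a set set" where
  "argmax_f N f = {X. X \<subseteq> N \<and> (\<forall>Y. Y \<subseteq> N \<longrightarrow> f Y \<le> f X)}"

end

theory Submission
  imports Defs
begin
definition mn :: "'a set set \<Rightarrow> bool" where
 "mn F \<longleftrightarrow> (\<forall>X\<in>F. \<forall>Y\<in>F. \<forall>i\<in>X - Y. (X - {i} \<in> F \<and> insert i Y \<in> F) \<or>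
     (\<exists>j\<in>Y - X. insert j (X - {i}) \<in> F \<and> insert i Y - {j} \<in> F))"

lemma mnD: "mn F \<Longrightarrow> X\<in>F \<Longrightarrow> Y\<in>F \<Longrightarrow> i\<in>X \<Longrightarrow> i\<notin>Y \<Longrightarrow>
  (X - {i} \<in> F \<and> insert i Y \<in> F) \<or> (\<exists>j\<in>Y - X. insert j (X - {i}) \<in> F \<and> insert i Y - {j} \<in> F)"
  unfolding mn_def by blast

lemma card_ins_int: "finite K \<Longrightarrow> i \<notin> K \<Longrightarrow> card (insert i K \<inter> S) = card (K \<inter> S) + (if i \<in> S then 1 else 0)"
  by (cases "i \<in> S") (auto simp: Int_insert_left)

lemma card_del_int: "finite K \<Longrightarrow> j \<in> K \<Longrightarrow> card (K \<inter> S) = card ((K - {j}) \<inter> S) + (if j \<in> S then 1 else 0)"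
proof -
  assume "finite K" "j \<in> K"
  then have "K = insert j (K - {j})" by blast
  then have "card (K \<inter> S) = card (insert j (K - {j}) \<inter> S)" by simp
  also have "\<dots> = card ((K - {j}) \<inter> S) + (if j \<in> S then 1 else 0)"
    using \<open>finite K\<close> by (intro card_ins_int) auto
  finally show ?thesis .
qed

lemma mn_sec0: "mn P \<Longrightarrow> mn {K\<in>P. x \<notin> K}"
  unfolding mn_def by (auto; blast)

lemma mn_int: "mn B \<Longrightarrow> A \<inter> E = {} \<Longrightarrow> mn {K. K \<subseteq> E \<and> A \<union> K \<in> B}"
proof -
  assume mB: "mn B" and d: "A \<inter> E = {}"
  show ?thesis unfolding mn_def
  proof (intro ballI)
    fix X Y i assume X: "X \<in> {K. K \<subseteq> E \<and> A \<union> K \<in> B}" and Y: "Y \<in> {K. K \<subseteq> E \<and> A \<union> K \<in> B}" and i: "i \<in> X - Y"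
    have iA: "i \<notin> A" using X i d by blast
    from mnD[OF mB, of "A \<union> X" "A \<union> Y" i] X Y i iA
    consider "A \<union> X - {i} \<in> B" "insert i (A \<union> Y) \<in> B"
      | j where "j \<in> (A \<union> Y) - (A \<union> X)" "insert j (A \<union> X - {i}) \<in> B" "insert i (A \<union> Y) - {j} \<in> B"
      by auto
    then show "(X - {i} \<in> {K. K \<subseteq> E \<and> A \<union> K \<in> B} \<and> insert i Y \<in> {K. K \<subseteq> E \<and> A \<union> K \<in> B}) \<or>
     (\<exists>j\<in>Y - X. insert j (X - {i}) \<in> {K. K \<subseteq> E \<and> A \<union> K \<in> B} \<and> insert i Y - {j} \<in> {K. K \<subseteq> E \<and> A \<union> K \<in> B})"
    proof cases
      case 1
      have "A \<union> X - {i} = A \<union> (X - {i})" using iA by blast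
      moreover have "insert i (A \<union> Y) = A \<union> insert i Y" by blast
      ultimately show ?thesis using 1 X Y i by auto
    next
      case (2 j)
      have jA: "j \<notin> A" "j \<in> Y" "j \<notin> X" using 2 by auto
      have "insert j (A \<union> X - {i}) = A \<union> insert j (X - {i})" using iA by blast
      moreover have "insert i (A \<union> Y) - {j} = A \<union> (insert i Y - {j})" using jA by blast
      ultimately show ?thesis using 2 X Y i jA by (intro disjI2 bexI[of _ j]) auto
    qed
  qed
qed

lemma mn_cint: "mn B \<Longrightarrow> E \<subseteq> R \<Longrightarrow> mn {K. K \<subseteq> E \<and> R - K \<in> B}"
proof -
  assume mB: "mn B" and d: "E \<subseteq> R"
  show ?thesis unfolding mn_def
  proof (intro ballI)
    fix X Y i assume X: "X \<in> {K. K \<subseteq> E \<and> R - K \<in> B}" and Y: "Y \<in> {K. K \<subseteq> E \<and> R - K \<in> B}" and i: "i \<in> X - Y"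
    have iR: "i \<in> R" using X i d by blast
    from mnD[OF mB, of "R - Y" "R - X" i] X Y i iR
    consider "R - Y - {i} \<in> B" "insert i (R - X) \<in> B"
      | j where "j \<in> (R - X) - (R - Y)" "insert j (R - Y - {i}) \<in> B" "insert i (R - X) - {j} \<in> B"
      by auto
    then show "(X - {i} \<in> {K. K \<subseteq> E \<and> R - K \<in> B} \<and> insert i Y \<in> {K. K \<subseteq> E \<and> R - K \<in> B}) \<or>
     (\<exists>j\<in>Y - X. insert j (X - {i}) \<in> {K. K \<subseteq> E \<and> R - K \<in> B} \<and> insert i Y - {j} \<in> {K. K \<subseteq> E \<and> R - K \<in> B})"
    proof cases
      case 1
      have "R - Y - {i} = R - insert i Y" by blast
      moreover have "insert i (R - X) = R - (X - {i})" using iR by blast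
      ultimately show ?thesis using 1 X Y i by auto
    next
      case (2 j)
      have jA: "j \<in> R" "j \<in> Y" "j \<notin> X" using 2 by auto
      have "insert j (R - Y - {i}) = R - (insert i Y - {j})" using jA i by blast
      moreover have "insert i (R - X) - {j} = R - insert j (X - {i})" using jA iR by blast
      ultimately show ?thesis using 2 X Y i jA by (intro disjI2 bexI[of _ j]) auto
    qed
  qed
qed

lemma mn_sec1: "mn P \<Longrightarrow> mn {K. x \<notin> K \<and> insert x K \<in> P}"
proof -
  assume "mn P"
  then have "mn {K. K \<subseteq> - {x} \<and> {x} \<union> K \<in> P}" by (rule mn_int) auto
  moreover have "{K. K \<subseteq> - {x} \<and> {x} \<union> K \<in> P} = {K. x \<notin> K \<and> insert x K \<in> P}" by auto
  ultimately show ?thesis by simp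
qed

lemma chain_max:
  assumes fin: "finite G" and PG: "P \<subseteq> Pow G" and ne: "P \<noteq> {}" and mP: "mn P" and WV: "W \<subseteq> V"
  shows "\<exists>K\<in>P. (\<forall>K'\<in>P. card (K' \<inter> V) \<le> card (K \<inter> V)) \<and> (\<forall>K'\<in>P. card (K' \<inter> W) \<le> card (K \<inter> W))"
proof -
  have finK: "\<And>K. K \<in> P \<Longrightarrow> finite K" using PG fin finite_subset by blast
  have bnd: "\<And>K S. K \<in> P \<Longrightarrow> card (K \<inter> S) \<le> card G"
    using PG fin by (meson Int_lower1 PowD card_mono order_trans subsetD)
  obtain K0 where K0: "K0 \<in> P" using ne by blast
  define M where "M = {K\<in>P. \<forall>K'\<in>P. card (K' \<inter> V) \<le> card (K \<inter> V)}"
  obtain K1 where K1: "K1 \<in> P \<and> (\<forall>y. y \<in> P \<longrightarrow> card G - card (K1 \<inter> V) \<le> card G - card (y \<inter> V))"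
    using ex_has_least_nat[of "\<lambda>K. K \<in> P" K0 "\<lambda>K. card G - card (K \<inter> V)"] K0 by blast
  have "\<forall>K'\<in>P. card (K' \<inter> V) \<le> card (K1 \<inter> V)"
  proof
    fix K' assume "K' \<in> P"
    then have "card G - card (K1 \<inter> V) \<le> card G - card (K' \<inter> V)" using K1 by blast
    moreover have "card (K1 \<inter> V) \<le> card G" "card (K' \<inter> V) \<le> card G" using bnd K1 \<open>K' \<in> P\<close> by auto
    ultimately show "card (K' \<inter> V) \<le> card (K1 \<inter> V)" by linarith
  qed
  then have "K1 \<in> M" unfolding M_def using K1 by blast
  then obtain K where KM: "K \<in> M" and Kmax: "\<forall>y. y \<in> M \<longrightarrow> card G - card (K \<inter> W) \<le> card G - card (y \<inter> W)"
    using ex_has_least_nat[of "\<lambda>K. K \<in> M" K1 "\<lambda>K. card G - card (K \<inter> W)"] by blast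
  have KP: "K \<in> P" and KV: "\<forall>K'\<in>P. card (K' \<inter> V) \<le> card (K \<inter> V)" using KM unfolding M_def by auto
  have KW: "\<forall>y\<in>M. card (y \<inter> W) \<le> card (K \<inter> W)"
  proof
    fix y assume y: "y \<in> M"
    then have "card G - card (K \<inter> W) \<le> card G - card (y \<inter> W)" using Kmax by blast
    moreover have "card (K \<inter> W) \<le> card G" "card (y \<inter> W) \<le> card G" using bnd KP y unfolding M_def by auto
    ultimately show "card (y \<inter> W) \<le> card (K \<inter> W)" by linarith
  qed
  define MW where "MW = {L\<in>P. \<forall>K'\<in>P. card (K' \<inter> W) \<le> card (L \<inter> W)}"
  obtain L1 where L1: "L1 \<in> P \<and> (\<forall>y. y \<in> P \<longrightarrow> card G - card (L1 \<inter> W) \<le> card G - card (y \<inter> W))"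
    using ex_has_least_nat[of "\<lambda>K. K \<in> P" K0 "\<lambda>K. card G - card (K \<inter> W)"] K0 by blast
  have "\<forall>K'\<in>P. card (K' \<inter> W) \<le> card (L1 \<inter> W)"
  proof
    fix K' assume "K' \<in> P"
    then have "card G - card (L1 \<inter> W) \<le> card G - card (K' \<inter> W)" using L1 by blast
    moreover have "card (L1 \<inter> W) \<le> card G" "card (K' \<inter> W) \<le> card G" using bnd L1 \<open>K' \<in> P\<close> by auto
    ultimately show "card (K' \<inter> W) \<le> card (L1 \<inter> W)" by linarith
  qed
  then have "L1 \<in> MW" unfolding MW_def using L1 by blast
  then obtain L where LM: "L \<in> MW" and Lmin: "\<forall>y. y \<in> MW \<longrightarrow> card (L - K) + card (K - L) \<le> card (y - K) + card (K - y)"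
    using ex_has_least_nat[of "\<lambda>L. L \<in> MW" L1 "\<lambda>L. card (L - K) + card (K - L)"] by blast
  have LP: "L \<in> P" and LW: "\<forall>K'\<in>P. card (K' \<inter> W) \<le> card (L \<inter> W)" using LM unfolding MW_def by auto
  have "card (L \<inter> W) \<le> card (K \<inter> W)"
  proof (rule ccontr)
    assume "\<not> ?thesis"
    then have "\<not> L \<inter> W \<subseteq> K \<inter> W" using card_mono finK KP by (metis Int_lower1 finite_subset linorder_le_less_linear not_less)
    then obtain i where i: "i \<in> L" "i \<in> W" "i \<notin> K" by blast
    have iV: "i \<in> V" using i WV by blast
    from mnD[OF mP LP KP i(1) i(3)]
    consider "insert i K \<in> P" | j where "j \<in> K - L" "insert j (L - {i}) \<in> P" "insert i K - {j} \<in> P" by blast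
    then show False
    proof cases
      case 1
      have "card (insert i K \<inter> V) = card (K \<inter> V) + 1" by (subst card_ins_int[OF finK[OF KP] i(3)]) (simp add: iV)
      then show False using KV 1 by fastforce
    next
      case (2 j)
      have fK: "finite K" using finK KP .
      have jK: "j \<in> K" "j \<notin> L" "j \<noteq> i" using 2 i by auto
      have e1: "insert i K - {j} = insert i (K - {j})" using jK by blast
      have cV: "card ((insert i K - {j}) \<inter> V) = card ((K - {j}) \<inter> V) + 1"
        unfolding e1 by (subst card_ins_int) (use fK i iV in auto)
      have cV2: "card (K \<inter> V) = card ((K - {j}) \<inter> V) + (if j \<in> V then 1 else 0)"
        using card_del_int[OF fK jK(1)] .
      have jV: "j \<in> V" using KV 2(3) cV cV2 by (metis add_0_iff add_le_cancel_left not_one_le_zero)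
      have inM: "insert i K - {j} \<in> M" unfolding M_def using 2(3) KV cV cV2 jV by auto
      have cW: "card ((insert i K - {j}) \<inter> W) = card ((K - {j}) \<inter> W) + 1"
        unfolding e1 by (subst card_ins_int) (use fK i in auto)
      have cW2: "card (K \<inter> W) = card ((K - {j}) \<inter> W) + (if j \<in> W then 1 else 0)"
        using card_del_int[OF fK jK(1)] .
      have jW: "j \<in> W" using KW inM cW cW2 by (metis add_0_iff add_le_cancel_left not_one_le_zero)
      have fL: "finite L" using finK LP .
      have cLW: "card (insert j (L - {i}) \<inter> W) = card (L \<inter> W)"
        by (subst card_ins_int) (use fL jK jW i card_del_int[OF fL i(1), of W] in auto)
      have inMW: "insert j (L - {i}) \<in> MW" unfolding MW_def using 2(2) LW cLW by auto
      have d1: "insert j (L - {i}) - K = (L - K) - {i}" using jK i by blast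
      have d2: "K - insert j (L - {i}) = (K - L) - {j}" using jK i by blast
      have "card ((L - K) - {i}) < card (L - K)" using fL i by (intro card_Diff1_less) auto
      moreover have "card ((K - L) - {j}) < card (K - L)" using fK jK by (intro card_Diff1_less) auto
      ultimately show False using Lmin inMW d1 d2 by (metis add_less_mono not_le)
    qed
  qed
  then have "\<forall>K'\<in>P. card (K' \<inter> W) \<le> card (K \<inter> W)" using LW by (meson order_trans)
  then show ?thesis using KP KV by blast
qed

lemma card_compl_int: "finite G \<Longrightarrow> L \<subseteq> G \<Longrightarrow> V \<subseteq> G \<Longrightarrow> card ((G - L) \<inter> V) = card V - card (L \<inter> V)"
proof -
  assume f: "finite G" and L: "L \<subseteq> G" and V: "V \<subseteq> G"
  have fV: "finite V" using f V finite_subset by blast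
  have "(G - L) \<inter> V = V - (L \<inter> V)" using V by blast
  then show ?thesis using fV by (simp add: card_Diff_subset)
qed

lemma chain_min:
  assumes fin: "finite G" and QG: "Q \<subseteq> Pow G" and ne: "Q \<noteq> {}" and mQ: "mn Q" and WV: "W \<subseteq> V" and VG: "V \<subseteq> G"
  shows "\<exists>L\<in>Q. (\<forall>L'\<in>Q. card (L \<inter> V) \<le> card (L' \<inter> V)) \<and> (\<forall>L'\<in>Q. card (L \<inter> W) \<le> card (L' \<inter> W))"
proof -
  define Qc where "Qc = {K. K \<subseteq> G \<and> G - K \<in> Q}"
  have mQc: "mn Qc" unfolding Qc_def by (rule mn_cint[OF mQ]) simp
  have QcG: "Qc \<subseteq> Pow G" unfolding Qc_def by auto
  obtain L0 where L0: "L0 \<in> Q" using ne by blast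
  have "G - L0 \<in> Qc" unfolding Qc_def using L0 QG by (auto simp: double_diff)
  then have neQc: "Qc \<noteq> {}" by blast
  obtain Kc where Kc: "Kc \<in> Qc" and KV: "\<forall>K'\<in>Qc. card (K' \<inter> V) \<le> card (Kc \<inter> V)"
    and KW: "\<forall>K'\<in>Qc. card (K' \<inter> W) \<le> card (Kc \<inter> W)"
    using chain_max[OF fin QcG neQc mQc WV] by blast
  have KcG: "Kc \<subseteq> G" and LQ: "G - Kc \<in> Q" using Kc unfolding Qc_def by auto
  have WG: "W \<subseteq> G" using WV VG by blast
  have "\<forall>L'\<in>Q. card ((G - Kc) \<inter> V) \<le> card (L' \<inter> V)"
  proof
    fix L' assume L': "L' \<in> Q"
    have L'G: "L' \<subseteq> G" using L' QG by blast
    have "G - L' \<in> Qc" unfolding Qc_def using L' L'G by (auto simp: double_diff)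
    then have "card ((G - L') \<inter> V) \<le> card (Kc \<inter> V)" using KV by blast
    moreover have "card ((G - L') \<inter> V) = card V - card (L' \<inter> V)" using card_compl_int[OF fin L'G VG] .
    moreover have "card ((G - Kc) \<inter> V) = card V - card (Kc \<inter> V)" using card_compl_int[OF fin KcG VG] .
    moreover have "card (Kc \<inter> V) \<le> card V" "card (L' \<inter> V) \<le> card V"
      using fin VG finite_subset by (auto intro: card_mono)
    ultimately show "card ((G - Kc) \<inter> V) \<le> card (L' \<inter> V)" by linarith
  qed
  moreover have "\<forall>L'\<in>Q. card ((G - Kc) \<inter> W) \<le> card (L' \<inter> W)"
  proof
    fix L' assume L': "L' \<in> Q"
    have L'G: "L' \<subseteq> G" using L' QG by blast
    have "G - L' \<in> Qc" unfolding Qc_def using L' L'G by (auto simp: double_diff)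
    then have "card ((G - L') \<inter> W) \<le> card (Kc \<inter> W)" using KW by blast
    moreover have "card ((G - L') \<inter> W) = card W - card (L' \<inter> W)" using card_compl_int[OF fin L'G WG] .
    moreover have "card ((G - Kc) \<inter> W) = card W - card (Kc \<inter> W)" using card_compl_int[OF fin KcG WG] .
    moreover have "card (Kc \<inter> W) \<le> card W" "card (L' \<inter> W) \<le> card W"
      using fin WG finite_subset by (auto intro: card_mono)
    ultimately show "card ((G - Kc) \<inter> W) \<le> card (L' \<inter> W)" by linarith
  qed
  ultimately show ?thesis using LQ by blast
qed

lemma crit:
  assumes fin: "finite G" and PG: "P \<subseteq> Pow G" and QG: "Q \<subseteq> Pow G" and mP: "mn P" and mQ: "mn Q"
    and disj: "P \<inter> Q = {}" and K0: "K0 \<in> P" and L0: "L0 \<in> Q" and LK0: "L0 \<subseteq> K0"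
    and K': "K' \<in> P" and L': "L' \<in> Q" and KL': "K' \<subseteq> L'"
  shows False
proof -
  have finP: "\<And>K. K \<in> P \<Longrightarrow> finite K" using PG fin finite_subset by blast
  have finQ: "\<And>K. K \<in> Q \<Longrightarrow> finite K" using QG fin finite_subset by blast
  define C where "C = (\<lambda>p. fst p \<in> P \<and> snd p \<in> Q \<and> snd p \<subseteq> fst p)"
  define mu where "mu = (\<lambda>p. card (fst p - K') + card (K' - fst p) + card (snd p - L') + card (L' - snd p))"
  have "C (K0, L0)" unfolding C_def using K0 L0 LK0 by simp
  then obtain p where Cp: "C p" and pmin: "\<forall>q. C q \<longrightarrow> mu p \<le> mu q"
    using ex_has_least_nat[of C "(K0,L0)" mu] by blast
  obtain K L where p: "p = (K, L)" by (cases p)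
  have KP: "K \<in> P" and LQ: "L \<in> Q" and LK: "L \<subseteq> K" using Cp p unfolding C_def by auto
  have fK: "finite K" using finP KP .
  have fL: "finite L" using finQ LQ .
  have fK': "finite K'" using finP K' .
  have fL': "finite L'" using finQ L' .
  have "K - L = {}"
  proof (rule ccontr)
    assume "K - L \<noteq> {}"
    then obtain i where iK: "i \<in> K" and iL: "i \<notin> L" by blast
    show False
    proof (cases "i \<in> K'")
      case False
      from mnD[OF mP KP K' iK False]
      consider "K - {i} \<in> P" | k where "k \<in> K' - K" "insert k (K - {i}) \<in> P" by blast
      then show False
      proof cases
        case 1
        have "C (K - {i}, L)" unfolding C_def using 1 LQ LK iL by auto
        then have "mu p \<le> mu (K - {i}, L)" using pmin by blast
        moreover have "(K - {i}) - K' = (K - K') - {i}" "K' - (K - {i}) = K' - K" using False by auto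
        moreover have "card ((K - K') - {i}) < card (K - K')" using fK iK False by (intro card_Diff1_less) auto
        ultimately show False unfolding mu_def p by simp
      next
        case (2 k)
        have "C (insert k (K - {i}), L)" unfolding C_def using 2 LQ LK iL by auto
        then have "mu p \<le> mu (insert k (K - {i}), L)" using pmin by blast
        moreover have "insert k (K - {i}) - K' = (K - K') - {i}" "K' - insert k (K - {i}) = (K' - K) - {k}"
          using False 2 by auto
        moreover have "card ((K - K') - {i}) < card (K - K')" using fK iK False by (intro card_Diff1_less) auto
        moreover have "card ((K' - K) - {k}) < card (K' - K)" using fK' 2 by (intro card_Diff1_less) auto
        ultimately show False unfolding mu_def p by simp
      qed
    next
      case True
      then have iL': "i \<in> L'" using KL' by blast
      from mnD[OF mQ L' LQ iL' iL]
      consider "insert i L \<in> Q" | l where "l \<in> L - L'" "insert i L - {l} \<in> Q" by blast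
      then show False
      proof cases
        case 1
        have "C (K, insert i L)" unfolding C_def using 1 KP LK iK by auto
        then have "mu p \<le> mu (K, insert i L)" using pmin by blast
        moreover have "insert i L - L' = L - L'" "L' - insert i L = (L' - L) - {i}" using iL' by auto
        moreover have "card ((L' - L) - {i}) < card (L' - L)" using fL' iL iL' by (intro card_Diff1_less) auto
        ultimately show False unfolding mu_def p by simp
      next
        case (2 l)
        have "C (K, insert i L - {l})" unfolding C_def using 2 KP LK iK by auto
        then have "mu p \<le> mu (K, insert i L - {l})" using pmin by blast
        moreover have "(insert i L - {l}) - L' = (L - L') - {l}" "L' - (insert i L - {l}) = (L' - L) - {i}"
          using iL' 2 by auto
        moreover have "card ((L' - L) - {i}) < card (L' - L)" using fL' iL iL' by (intro card_Diff1_less) auto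
        moreover have "card ((L - L') - {l}) < card (L - L')" using fL 2 by (intro card_Diff1_less) auto
        ultimately show False unfolding mu_def p by simp
      qed
    qed
  qed
  then have "K = L" using LK by blast
  then show False using KP LQ disj by blast
qed

lemma card_insx: "finite K \<Longrightarrow> x \<notin> S \<Longrightarrow> card (K \<inter> insert x S) = card (K \<inter> S) + (if x \<in> K then 1 else 0)"
proof -
  assume f: "finite K" and x: "x \<notin> S"
  show ?thesis
  proof (cases "x \<in> K")
    case True
    then have "K \<inter> insert x S = insert x (K \<inter> S)" by blast
    then show ?thesis using f x True by simp
  next
    case False
    then have "K \<inter> insert x S = K \<inter> S" by blast
    then show ?thesis using False by simp
  qed
qed

lemma sec_G1:
  assumes mP: "mn P" and fP: "\<And>K. K \<in> P \<Longrightarrow> finite K" and ne: "\<exists>K\<in>P. x \<notin> K" and xS: "x \<notin> S" and KP: "K \<in> P"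
  shows "\<exists>K0\<in>{K\<in>P. x \<notin> K}. card (K \<inter> S) \<le> card (K0 \<inter> S) \<and> card (K0 \<inter> S) \<le> card (K \<inter> insert x S)"
proof (cases "x \<in> K")
  case False
  then show ?thesis using KP card_insx[OF fP[OF KP] xS] by auto
next
  case True
  obtain K' where K': "K' \<in> P" "x \<notin> K'" using ne by blast
  have fK: "finite K" using fP KP .
  have cK: "card (K \<inter> insert x S) = card (K \<inter> S) + 1" using card_insx[OF fK xS] True by simp
  have e: "(K - {x}) \<inter> S = K \<inter> S" using xS by blast
  from mnD[OF mP KP K'(1) True K'(2)]
  consider "K - {x} \<in> P" | k where "k \<in> K' - K" "insert k (K - {x}) \<in> P" by blast
  then show ?thesis
  proof cases
    case 1
    then show ?thesis using e cK by (intro bexI[of _ "K - {x}"]) auto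
  next
    case (2 k)
    have kx: "k \<noteq> x" using 2 K' by auto
    have c: "card (insert k (K - {x}) \<inter> S) = card (K \<inter> S) + (if k \<in> S then 1 else 0)"
      using card_ins_int[of "K - {x}" k S] fK 2 e by simp
    show ?thesis using 2 kx c cK by (intro bexI[of _ "insert k (K - {x})"]) auto
  qed
qed

lemma sec_G2:
  assumes mP: "mn P" and fP: "\<And>K. K \<in> P \<Longrightarrow> finite K" and ne: "\<exists>K\<in>P. x \<in> K" and xS: "x \<notin> S" and KP: "K \<in> P"
  shows "\<exists>K1\<in>{K. x \<notin> K \<and> insert x K \<in> P}. card (K1 \<inter> S) \<le> card (K \<inter> S) \<and> card (K \<inter> insert x S) \<le> card (K1 \<inter> S) + 1"
proof (cases "x \<in> K")
  case True
  have fK: "finite K" using fP KP .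
  have e: "(K - {x}) \<inter> S = K \<inter> S" using xS by blast
  have "insert x (K - {x}) = K" using True by blast
  then show ?thesis using KP e card_insx[OF fK xS] True by (intro bexI[of _ "K - {x}"]) auto
next
  case False
  obtain K' where K': "K' \<in> P" "x \<in> K'" using ne by blast
  have fK: "finite K" using fP KP .
  have cK: "card (K \<inter> insert x S) = card (K \<inter> S)" using card_insx[OF fK xS] False by simp
  from mnD[OF mP K'(1) KP K'(2) False]
  consider "insert x K \<in> P" | k where "k \<in> K - K'" "insert x K - {k} \<in> P" by blast
  then show ?thesis
  proof cases
    case 1
    then show ?thesis using False cK by (intro bexI[of _ K]) auto
  next
    case (2 k)
    have kx: "k \<noteq> x" using 2 K' by auto
    have e: "insert x (K - {k}) = insert x K - {k}" using kx by blast
    have c: "card (K \<inter> S) = card ((K - {k}) \<inter> S) + (if k \<in> S then 1 else 0)"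
      using card_del_int[OF fK] 2 by simp
    have "card ((K - {k}) \<inter> S) \<le> card (K \<inter> S)" using c by simp
    moreover have "card (K \<inter> insert x S) \<le> card ((K - {k}) \<inter> S) + 1" using c cK by simp
    ultimately show ?thesis using 2 e False by (intro bexI[of _ "K - {k}"]) auto
  qed
qed

lemma card_mod_int: "finite A \<Longrightarrow> card (A \<inter> (U \<union> V)) + card (A \<inter> (U \<inter> V)) = card (A \<inter> U) + card (A \<inter> V)"
proof -
  assume f: "finite A"
  have "A \<inter> (U \<union> V) = (A \<inter> U) \<union> (A \<inter> V)" "A \<inter> (U \<inter> V) = (A \<inter> U) \<inter> (A \<inter> V)" by blast+
  then show ?thesis using card_Un_Int[of "A \<inter> U" "A \<inter> V"] f by simp
qed

lemma sepA:
  "finite G \<Longrightarrow> P \<subseteq> Pow G \<Longrightarrow> Q \<subseteq> Pow G \<Longrightarrow> P \<noteq> {} \<Longrightarrow> Q \<noteq> {} \<Longrightarrow> mn P \<Longrightarrow> mn Q \<Longrightarrow>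
   (\<forall>K\<in>P. \<forall>L\<in>Q. \<not> L \<subseteq> K) \<Longrightarrow> \<exists>S\<subseteq>G. \<forall>K\<in>P. \<forall>L\<in>Q. card (K \<inter> S) < card (L \<inter> S)"
proof (induction G arbitrary: P Q rule: finite_induct)
  case empty
  then have "P = {{}}" "Q = {{}}" by auto
  then show ?case using empty by auto
next
  case (insert x G)
  note IH = insert.IH
  have PG: "P \<subseteq> Pow (insert x G)" and QG: "Q \<subseteq> Pow (insert x G)" and neP: "P \<noteq> {}" and neQ: "Q \<noteq> {}"
    and mP: "mn P" and mQ: "mn Q" and H: "\<forall>K\<in>P. \<forall>L\<in>Q. \<not> L \<subseteq> K" using insert.prems by auto
  have finG: "finite (insert x G)" using insert.hyps by simp
  have fP: "\<And>K. K \<in> P \<Longrightarrow> finite K" using PG finG finite_subset by blast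
  have fQ: "\<And>K. K \<in> Q \<Longrightarrow> finite K" using QG finG finite_subset by blast
  define P0 where "P0 = {K\<in>P. x \<notin> K}"
  define P1 where "P1 = {K. x \<notin> K \<and> insert x K \<in> P}"
  define Q0 where "Q0 = {K\<in>Q. x \<notin> K}"
  define Q1 where "Q1 = {K. x \<notin> K \<and> insert x K \<in> Q}"
  have P0G: "P0 \<subseteq> Pow G" and Q0G: "Q0 \<subseteq> Pow G" using PG QG unfolding P0_def Q0_def by auto
  have P1G: "P1 \<subseteq> Pow G" and Q1G: "Q1 \<subseteq> Pow G" using PG QG unfolding P1_def Q1_def by auto
  have mP0: "mn P0" and mQ0: "mn Q0" unfolding P0_def Q0_def using mn_sec0[OF mP] mn_sec0[OF mQ] by auto
  have mP1: "mn P1" and mQ1: "mn Q1" unfolding P1_def Q1_def using mn_sec1[OF mP] mn_sec1[OF mQ] by auto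
  have H00: "\<forall>K\<in>P0. \<forall>L\<in>Q0. \<not> L \<subseteq> K" using H unfolding P0_def Q0_def by auto
  have H11: "\<forall>K\<in>P1. \<forall>L\<in>Q1. \<not> L \<subseteq> K"
  proof (intro ballI notI)
    fix K L assume "K \<in> P1" "L \<in> Q1" "L \<subseteq> K"
    then have "insert x K \<in> P" "insert x L \<in> Q" "insert x L \<subseteq> insert x K" unfolding P1_def Q1_def by auto
    then show False using H by blast
  qed
  have H10: "\<forall>K\<in>P1. \<forall>L\<in>Q0. \<not> L \<subseteq> K"
  proof (intro ballI notI)
    fix K L assume "K \<in> P1" "L \<in> Q0" "L \<subseteq> K"
    then have "insert x K \<in> P" "L \<in> Q" "L \<subseteq> insert x K" unfolding P1_def Q0_def by auto
    then show False using H by blast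
  qed
  have xG: "x \<notin> G" using insert.hyps by simp
  have noxS: "\<And>S. S \<subseteq> G \<Longrightarrow> x \<notin> S" using xG by blast
  have cP1: "\<And>K S. K \<in> P \<Longrightarrow> x \<in> K \<Longrightarrow> x \<notin> S \<Longrightarrow> K - {x} \<in> P1 \<and> card (K \<inter> S) = card ((K - {x}) \<inter> S)"
  proof -
    fix K S assume "K \<in> P" "x \<in> K" "x \<notin> S"
    moreover have "(K - {x}) \<inter> S = K \<inter> S" using \<open>x \<notin> S\<close> by blast
    moreover have "insert x (K - {x}) = K" using \<open>x \<in> K\<close> by blast
    ultimately show "K - {x} \<in> P1 \<and> card (K \<inter> S) = card ((K - {x}) \<inter> S)" unfolding P1_def by auto
  qed
  have cQ1: "\<And>K S. K \<in> Q \<Longrightarrow> x \<in> K \<Longrightarrow> x \<notin> S \<Longrightarrow> K - {x} \<in> Q1 \<and> card (K \<inter> insert x S) = card ((K - {x}) \<inter> S) + 1"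
  proof -
    fix K S assume a: "K \<in> Q" "x \<in> K" "x \<notin> S"
    moreover have "(K - {x}) \<inter> S = K \<inter> S" using \<open>x \<notin> S\<close> by blast
    moreover have "insert x (K - {x}) = K" using \<open>x \<in> K\<close> by blast
    moreover have "card (K \<inter> insert x S) = card (K \<inter> S) + 1" using card_insx[OF fQ[OF a(1)] a(3)] a(2) by simp
    ultimately show "K - {x} \<in> Q1 \<and> card (K \<inter> insert x S) = card ((K - {x}) \<inter> S) + 1" unfolding Q1_def by auto
  qed
  show ?case
  proof (cases "P0 = {}")
    case P0e: True
    have allx: "\<forall>K\<in>P. x \<in> K" using P0e unfolding P0_def by auto
    have neP1: "P1 \<noteq> {}" using neP allx cP1 by blast
    show ?thesis
    proof (cases "Q1 = {}")
      case False
      obtain S1 where S1: "S1 \<subseteq> G" "\<forall>K\<in>P1. \<forall>L\<in>Q1. card (K \<inter> S1) < card (L \<inter> S1)"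
        using IH[OF P1G Q1G neP1 False mP1 mQ1 H11] by blast
      have xS1: "x \<notin> S1" using noxS S1(1) .
      have exQx: "\<exists>K\<in>Q. x \<in> K" using False unfolding Q1_def by blast
      have "\<forall>K\<in>P. \<forall>L\<in>Q. card (K \<inter> S1) < card (L \<inter> S1)"
      proof (intro ballI)
        fix K L assume K: "K \<in> P" and L: "L \<in> Q"
        obtain L1 where L1: "L1 \<in> Q1" "card (L1 \<inter> S1) \<le> card (L \<inter> S1)"
          using sec_G2[OF mQ fQ exQx xS1 L] unfolding Q1_def by blast
        have k1: "K - {x} \<in> P1" "card (K \<inter> S1) = card ((K - {x}) \<inter> S1)" using cP1[OF K _ xS1] allx K by auto
        have "card ((K - {x}) \<inter> S1) < card (L1 \<inter> S1)" using S1(2) k1(1) L1(1) by blast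
        then show "card (K \<inter> S1) < card (L \<inter> S1)" using k1(2) L1(2) by linarith
      qed
      then show ?thesis using S1(1) by blast
    next
      case True
      have "\<forall>L\<in>Q. x \<notin> L" using True cQ1[of _ "{}"] by blast
      then have Q0Q: "Q0 = Q" unfolding Q0_def by auto
      obtain S1 where S1: "S1 \<subseteq> G" "\<forall>K\<in>P1. \<forall>L\<in>Q0. card (K \<inter> S1) < card (L \<inter> S1)"
        using IH[OF P1G Q0G neP1 _ mP1 mQ0 H10] Q0Q neQ by blast
      have xS1: "x \<notin> S1" using noxS S1(1) .
      have "\<forall>K\<in>P. \<forall>L\<in>Q. card (K \<inter> S1) < card (L \<inter> S1)"
      proof (intro ballI)
        fix K L assume K: "K \<in> P" and L: "L \<in> Q"
        have k1: "K - {x} \<in> P1" "card (K \<inter> S1) = card ((K - {x}) \<inter> S1)" using cP1[OF K _ xS1] allx K by auto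
        have "L \<in> Q0" using L Q0Q by simp
        then have "card ((K - {x}) \<inter> S1) < card (L \<inter> S1)" using S1(2) k1(1) by blast
        then show "card (K \<inter> S1) < card (L \<inter> S1)" using k1(2) by linarith
      qed
      then show ?thesis using S1(1) by blast
    qed
  next
    case P0ne: False
    show ?thesis
    proof (cases "P1 = {}")
      case P1e: True
      have nox: "\<forall>K\<in>P. x \<notin> K"
      proof
        fix K assume "K \<in> P"
        show "x \<notin> K"
        proof
          assume "x \<in> K"
          have "K - {x} \<in> P1 \<and> card (K \<inter> {}) = card ((K - {x}) \<inter> {})"
            by (rule cP1) (use \<open>K\<in>P\<close> \<open>x \<in> K\<close> in auto)
          then show False using P1e by simp
        qed
      qed
      have P0P: "P0 = P" using nox unfolding P0_def by auto
      show ?thesis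
      proof (cases "Q0 = {}")
        case False
        obtain S0 where S0: "S0 \<subseteq> G" "\<forall>K\<in>P0. \<forall>L\<in>Q0. card (K \<inter> S0) < card (L \<inter> S0)"
          using IH[OF P0G Q0G P0ne False mP0 mQ0 H00] by blast
        have xS0: "x \<notin> S0" using noxS S0(1) .
        have exQ0: "\<exists>K\<in>Q. x \<notin> K" using False unfolding Q0_def by blast
        have "\<forall>K\<in>P. \<forall>L\<in>Q. card (K \<inter> insert x S0) < card (L \<inter> insert x S0)"
        proof (intro ballI)
          fix K L assume K: "K \<in> P" and L: "L \<in> Q"
          obtain L0 where L0: "L0 \<in> Q0" "card (L0 \<inter> S0) \<le> card (L \<inter> insert x S0)"
            using sec_G1[OF mQ fQ exQ0 xS0 L] unfolding Q0_def by blast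
          have c: "card (K \<inter> insert x S0) = card (K \<inter> S0)" using card_insx[OF fP[OF K] xS0] nox K by simp
          have "K \<in> P0" using K P0P by simp
          then have "card (K \<inter> S0) < card (L0 \<inter> S0)" using S0(2) L0(1) by blast
          then show "card (K \<inter> insert x S0) < card (L \<inter> insert x S0)" using c L0(2) by linarith
        qed
        moreover have "insert x S0 \<subseteq> insert x G" using S0(1) by blast
        ultimately show ?thesis by (intro exI[of _ "insert x S0"]) simp
      next
        case True
        have allx: "\<forall>L\<in>Q. x \<in> L" using True unfolding Q0_def by auto
        have "\<forall>K\<in>P. \<forall>L\<in>Q. card (K \<inter> {x}) < card (L \<inter> {x})"
        proof (intro ballI)
          fix K L assume "K \<in> P" "L \<in> Q"
          then have "K \<inter> {x} = {}" "L \<inter> {x} = {x}" using nox allx by auto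
          then show "card (K \<inter> {x}) < card (L \<inter> {x})" by simp
        qed
        then show ?thesis by (intro exI[of _ "{x}"]) simp
      qed
    next
      case P1ne: False
      have exP0: "\<exists>K\<in>P. x \<notin> K" using P0ne unfolding P0_def by blast
      have exP1: "\<exists>K\<in>P. x \<in> K" using P1ne unfolding P1_def by blast
      show ?thesis
      proof (cases "Q0 = {}")
        case Q0e: True
        have allx: "\<forall>L\<in>Q. x \<in> L" using Q0e unfolding Q0_def by auto
        have neQ1: "Q1 \<noteq> {}" using neQ allx cQ1[of _ "{}"] by blast
        obtain S1 where S1: "S1 \<subseteq> G" "\<forall>K\<in>P1. \<forall>L\<in>Q1. card (K \<inter> S1) < card (L \<inter> S1)"
          using IH[OF P1G Q1G P1ne neQ1 mP1 mQ1 H11] by blast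
        have xS1: "x \<notin> S1" using noxS S1(1) .
        have "\<forall>K\<in>P. \<forall>L\<in>Q. card (K \<inter> insert x S1) < card (L \<inter> insert x S1)"
        proof (intro ballI)
          fix K L assume K: "K \<in> P" and L: "L \<in> Q"
          obtain K1 where K1: "K1 \<in> P1" "card (K \<inter> insert x S1) \<le> card (K1 \<inter> S1) + 1"
            using sec_G2[OF mP fP exP1 xS1 K] unfolding P1_def by blast
          have l1: "L - {x} \<in> Q1" "card (L \<inter> insert x S1) = card ((L - {x}) \<inter> S1) + 1"
            using cQ1[OF L _ xS1] allx L by auto
          have "card (K1 \<inter> S1) < card ((L - {x}) \<inter> S1)" using S1(2) K1(1) l1(1) by blast
          then show "card (K \<inter> insert x S1) < card (L \<inter> insert x S1)" using l1(2) K1(2) by linarith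
        qed
        moreover have "insert x S1 \<subseteq> insert x G" using S1(1) by blast
        ultimately show ?thesis by (intro exI[of _ "insert x S1"]) simp
      next
        case Q0ne: False
        have exQ0: "\<exists>K\<in>Q. x \<notin> K" using Q0ne unfolding Q0_def by blast
        obtain S0 where S0: "S0 \<subseteq> G" "\<forall>K\<in>P0. \<forall>L\<in>Q0. card (K \<inter> S0) < card (L \<inter> S0)"
          using IH[OF P0G Q0G P0ne Q0ne mP0 mQ0 H00] by blast
        have xS0: "x \<notin> S0" using noxS S0(1) .
        show ?thesis
        proof (cases "Q1 = {}")
          case True
          have "\<forall>L\<in>Q. x \<notin> L" using True cQ1[of _ "{}"] by blast
      then have Q0Q: "Q0 = Q" unfolding Q0_def by auto
          have "\<forall>K\<in>P. \<forall>L\<in>Q. card (K \<inter> S0) < card (L \<inter> S0)"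
          proof (intro ballI)
            fix K L assume K: "K \<in> P" and L: "L \<in> Q"
            obtain K0 where K0: "K0 \<in> P0" "card (K \<inter> S0) \<le> card (K0 \<inter> S0)"
              using sec_G1[OF mP fP exP0 xS0 K] unfolding P0_def by blast
            have "L \<in> Q0" using L Q0Q by simp
            then have "card (K0 \<inter> S0) < card (L \<inter> S0)" using S0(2) K0(1) by blast
            then show "card (K \<inter> S0) < card (L \<inter> S0)" using K0(2) by linarith
          qed
          then show ?thesis using S0(1) by blast
        next
          case Q1ne: False
          have exQ1: "\<exists>K\<in>Q. x \<in> K" using Q1ne unfolding Q1_def by blast
          obtain S1 where S1: "S1 \<subseteq> G" "\<forall>K\<in>P1. \<forall>L\<in>Q1. card (K \<inter> S1) < card (L \<inter> S1)"
            using IH[OF P1G Q1G P1ne Q1ne mP1 mQ1 H11] by blast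
          have xS1: "x \<notin> S1" using noxS S1(1) .
          define T1 where "T1 = insert x (S0 \<union> S1)"
          define T2 where "T2 = S0 \<inter> S1"
          have T21: "T2 \<subseteq> T1" and T1G: "T1 \<subseteq> insert x G" unfolding T1_def T2_def using S0 S1 by auto
          obtain Ks where Ks: "Ks \<in> P" "\<forall>K'\<in>P. card (K' \<inter> T1) \<le> card (Ks \<inter> T1)" "\<forall>K'\<in>P. card (K' \<inter> T2) \<le> card (Ks \<inter> T2)"
            using chain_max[OF finG PG neP mP T21] by blast
          obtain Ls where Ls: "Ls \<in> Q" "\<forall>L'\<in>Q. card (Ls \<inter> T1) \<le> card (L' \<inter> T1)" "\<forall>L'\<in>Q. card (Ls \<inter> T2) \<le> card (L' \<inter> T2)"
            using chain_min[OF finG QG neQ mQ T21 T1G] by blast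
          have e1: "T1 = S0 \<union> insert x S1" "T2 = S0 \<inter> insert x S1" unfolding T1_def T2_def using xS0 by auto
          have e2: "T1 = insert x S0 \<union> S1" "T2 = insert x S0 \<inter> S1" unfolding T1_def T2_def using xS1 by auto
          have mK: "card (Ks \<inter> T1) + card (Ks \<inter> T2) = card (Ks \<inter> S0) + card (Ks \<inter> insert x S1)"
            unfolding e1 using card_mod_int[OF fP[OF Ks(1)]] .
          have mL: "card (Ls \<inter> T1) + card (Ls \<inter> T2) = card (Ls \<inter> insert x S0) + card (Ls \<inter> S1)"
            unfolding e2 using card_mod_int[OF fQ[OF Ls(1)]] .
          obtain K0 where K0: "K0 \<in> P0" "card (Ks \<inter> S0) \<le> card (K0 \<inter> S0)"
            using sec_G1[OF mP fP exP0 xS0 Ks(1)] unfolding P0_def by blast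
          obtain L0 where L0: "L0 \<in> Q0" "card (L0 \<inter> S0) \<le> card (Ls \<inter> insert x S0)"
            using sec_G1[OF mQ fQ exQ0 xS0 Ls(1)] unfolding Q0_def by blast
          obtain K1 where K1: "K1 \<in> P1" "card (Ks \<inter> insert x S1) \<le> card (K1 \<inter> S1) + 1"
            using sec_G2[OF mP fP exP1 xS1 Ks(1)] unfolding P1_def by blast
          obtain L1 where L1: "L1 \<in> Q1" "card (L1 \<inter> S1) \<le> card (Ls \<inter> S1)"
            using sec_G2[OF mQ fQ exQ1 xS1 Ls(1)] unfolding Q1_def by blast
          have s0: "card (K0 \<inter> S0) < card (L0 \<inter> S0)" using S0(2) K0 L0 by blast
          have s1: "card (K1 \<inter> S1) < card (L1 \<inter> S1)" using S1(2) K1 L1 by blast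
          have lt: "card (Ks \<inter> T1) + card (Ks \<inter> T2) < card (Ls \<inter> T1) + card (Ls \<inter> T2)"
            using mK mL K0 L0 K1 L1 s0 s1 by linarith
          have "(\<forall>K\<in>P. \<forall>L\<in>Q. card (K \<inter> T1) < card (L \<inter> T1)) \<or> (\<forall>K\<in>P. \<forall>L\<in>Q. card (K \<inter> T2) < card (L \<inter> T2))"
          proof (rule ccontr)
            assume "\<not> ?thesis"
            then obtain Ka La Kb Lb where ab: "Ka \<in> P" "La \<in> Q" "card (La \<inter> T1) \<le> card (Ka \<inter> T1)"
              "Kb \<in> P" "Lb \<in> Q" "card (Lb \<inter> T2) \<le> card (Kb \<inter> T2)" by (meson not_less)
            have "card (Ls \<inter> T1) \<le> card (Ks \<inter> T1)" using ab Ks Ls by (meson order_trans)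
            moreover have "card (Ls \<inter> T2) \<le> card (Ks \<inter> T2)" using ab Ks Ls by (meson order_trans)
            ultimately show False using lt by linarith
          qed
          moreover have "T2 \<subseteq> insert x G" using T21 T1G by blast
          ultimately show ?thesis using T1G by (elim disjE) (intro exI conjI, assumption+)+
        qed
      qed
    qed
  qed
qed

lemma card_opt_ins:
  assumes "finite J" and "a = J \<or> (\<exists>k. k \<notin> J \<and> a = insert k J)"
  shows "card (J \<inter> S) \<le> card (a \<inter> S) \<and> card (a \<inter> S) \<le> card (J \<inter> S) + 1"
  using assms
proof (elim disjE exE conjE)
  fix k assume "k \<notin> J" "a = insert k J"
  then show ?thesis using card_ins_int[OF assms(1), of k S] by simp
qed simp

lemma card_disj_un: "finite J1 \<Longrightarrow> finite J0 \<Longrightarrow> J0 \<inter> J1 = {} \<Longrightarrow> card ((J0 \<union> J1) \<inter> S) = card (J1 \<inter> S) + card (J0 \<inter> S)"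
proof -
  assume f: "finite J1" "finite J0" and d: "J0 \<inter> J1 = {}"
  have "(J0 \<union> J1) \<inter> S = (J1 \<inter> S) \<union> (J0 \<inter> S)" by blast
  moreover have "(J1 \<inter> S) \<inter> (J0 \<inter> S) = {}" using d by blast
  ultimately show ?thesis using f by (simp add: card_Un_disjoint)
qed

lemma merge:
  assumes mB: "mn B" and fE: "finite E" and AE: "A \<inter> E = {}" and ER: "E \<subseteq> R" and iA: "i \<notin> A"
    and iR: "i \<in> R" and iE: "i \<notin> E"
    and J: "J0 \<subseteq> E" "J1 \<subseteq> E" "J2 \<subseteq> E" "J0 \<inter> J1 = {}" "J0 \<inter> J2 = {}"
    and h1: "insert i (A \<union> J1) \<in> B" and h2: "R - (J0 \<union> J1) \<in> B"
    and h3: "A \<union> (J0 \<union> J2) \<in> B" and h4: "R - J2 - {i} \<in> B"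
  shows "\<exists>K\<subseteq>E. A \<union> K \<in> B \<and> R - K \<in> B"
proof (rule ccontr)
  assume nK: "\<not> ?thesis"
  define P0 where "P0 = {K. K \<subseteq> E \<and> A \<union> K \<in> B}"
  define Q0 where "Q0 = {K. K \<subseteq> E \<and> R - K \<in> B}"
  have disj: "P0 \<inter> Q0 = {}" using nK unfolding P0_def Q0_def by blast
  have mP: "mn P0" unfolding P0_def using mn_int[OF mB AE] .
  have mQ: "mn Q0" unfolding Q0_def using mn_cint[OF mB ER] .
  have PE: "P0 \<subseteq> Pow E" and QE: "Q0 \<subseteq> Pow E" unfolding P0_def Q0_def by auto
  have fJ: "finite J0" "finite J1" "finite J2" using J fE finite_subset by blast+
  have q1: "J0 \<union> J1 \<in> Q0" unfolding Q0_def using h2 J by auto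
  have p2: "J0 \<union> J2 \<in> P0" unfolding P0_def using h3 J by auto
  obtain a where aP: "a \<in> P0" and aJ: "a = J1 \<or> (\<exists>k. k \<notin> J1 \<and> a = insert k J1)"
  proof -
    have iX: "i \<in> insert i (A \<union> J1)" by simp
    have iY: "i \<notin> A \<union> (J0 \<union> J2)" using iA iE J by blast
    from mnD[OF mB h1 h3 iX iY]
    consider "insert i (A \<union> J1) - {i} \<in> B"
      | k where "k \<in> A \<union> (J0 \<union> J2) - insert i (A \<union> J1)" "insert k (insert i (A \<union> J1) - {i}) \<in> B" by blast
    then show ?thesis
    proof cases
      case 1
      have "insert i (A \<union> J1) - {i} = A \<union> J1" using iA iE J by blast
      then have "J1 \<in> P0" unfolding P0_def using 1 J by auto
      then show ?thesis using that by blast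
    next
      case (2 k)
      have kE: "k \<in> E" "k \<notin> J1" using 2 J by auto
      have "insert k (insert i (A \<union> J1) - {i}) = A \<union> insert k J1" using iA iE J kE by blast
      then have "insert k J1 \<in> P0" unfolding P0_def using 2 J kE by auto
      then show ?thesis using that kE by blast
    qed
  qed
  obtain b where bQ: "b \<in> Q0" and bJ: "b = J2 \<or> (\<exists>l. l \<notin> J2 \<and> b = insert l J2)"
  proof -
    have iX: "i \<in> R - (J0 \<union> J1)" using iR iE J by blast
    have iY: "i \<notin> R - J2 - {i}" by simp
    from mnD[OF mB h2 h4 iX iY]
    consider "insert i (R - J2 - {i}) \<in> B"
      | l where "l \<in> (R - J2 - {i}) - (R - (J0 \<union> J1))" "insert i (R - J2 - {i}) - {l} \<in> B" by blast
    then show ?thesis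
    proof cases
      case 1
      have "insert i (R - J2 - {i}) = R - J2" using iR iE J by blast
      then have "J2 \<in> Q0" unfolding Q0_def using 1 J by auto
      then show ?thesis using that by blast
    next
      case (2 l)
      have lE: "l \<in> E" "l \<notin> J2" "l \<noteq> i" using 2 J by auto
      have "insert i (R - J2 - {i}) - {l} = R - insert l J2" using iR iE J lE by blast
      then have "insert l J2 \<in> Q0" unfolding Q0_def using 2 J lE by auto
      then show ?thesis using that lE by blast
    qed
  qed
  have ca: "\<And>S. card (J1 \<inter> S) \<le> card (a \<inter> S) \<and> card (a \<inter> S) \<le> card (J1 \<inter> S) + 1"
    using card_opt_ins[OF fJ(2) aJ] .
  have cb: "\<And>S. card (J2 \<inter> S) \<le> card (b \<inter> S) \<and> card (b \<inter> S) \<le> card (J2 \<inter> S) + 1"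
    using card_opt_ins[OF fJ(3) bJ] .
  have c1: "\<And>S. card ((J0 \<union> J1) \<inter> S) = card (J1 \<inter> S) + card (J0 \<inter> S)"
    using card_disj_un[OF fJ(2) fJ(1) J(4)] .
  have c2: "\<And>S. card ((J0 \<union> J2) \<inter> S) = card (J2 \<inter> S) + card (J0 \<inter> S)"
    using card_disj_un[OF fJ(3) fJ(1) J(5)] .
  have neP: "P0 \<noteq> {}" and neQ: "Q0 \<noteq> {}" using aP bQ by auto
  have "(\<forall>K\<in>P0. \<forall>L\<in>Q0. \<not> L \<subseteq> K) \<or> (\<forall>L\<in>Q0. \<forall>K\<in>P0. \<not> K \<subseteq> L)"
  proof (rule ccontr)
    assume "\<not> ?thesis"
    then obtain K0 L0 K' L' where "K0 \<in> P0" "L0 \<in> Q0" "L0 \<subseteq> K0" "K' \<in> P0" "L' \<in> Q0" "K' \<subseteq> L'" by blast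
    then show False using crit[OF fE PE QE mP mQ disj] by blast
  qed
  then show False
  proof
    assume H: "\<forall>K\<in>P0. \<forall>L\<in>Q0. \<not> L \<subseteq> K"
    obtain S where S: "\<forall>K\<in>P0. \<forall>L\<in>Q0. card (K \<inter> S) < card (L \<inter> S)"
      using sepA[OF fE PE QE neP neQ mP mQ H] by blast
    have "card (a \<inter> S) < card ((J0 \<union> J1) \<inter> S)" using S aP q1 by blast
    moreover have "card ((J0 \<union> J2) \<inter> S) < card (b \<inter> S)" using S p2 bQ by blast
    ultimately show False using ca[of S] cb[of S] c1[of S] c2[of S] by linarith
  next
    assume H: "\<forall>L\<in>Q0. \<forall>K\<in>P0. \<not> K \<subseteq> L"
    obtain S where S: "\<forall>L\<in>Q0. \<forall>K\<in>P0. card (L \<inter> S) < card (K \<inter> S)"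
      using sepA[OF fE QE PE neQ neP mQ mP H] by blast
    have "card ((J0 \<union> J1) \<inter> S) < card (a \<inter> S)" using S aP q1 by blast
    moreover have "card (b \<inter> S) < card ((J0 \<union> J2) \<inter> S)" using S p2 bQ by blast
    ultimately show False using ca[of S] cb[of S] c1[of S] c2[of S] by linarith
  qed
qed

lemma main_mn:
  "finite I \<Longrightarrow> finite G \<Longrightarrow> B \<subseteq> Pow G \<Longrightarrow> mn B \<Longrightarrow> X \<in> B \<Longrightarrow> Y \<in> B \<Longrightarrow> I \<subseteq> X - Y \<Longrightarrow>
   \<exists>J\<subseteq>Y - X. (X - I) \<union> J \<in> B \<and> (Y - J) \<union> I \<in> B"
proof (induction I arbitrary: X Y rule: finite_induct)
  case empty
  then show ?case by (intro exI[of _ "{}"]) auto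
next
  case (insert i I0)
  have fG: "finite G" and BG: "B \<subseteq> Pow G" and mB: "mn B" and XB: "X \<in> B" and YB: "Y \<in> B"
    and IXY: "insert i I0 \<subseteq> X - Y" using insert.prems by auto
  note IH = insert.IH[OF fG BG mB]
  have iI0: "i \<notin> I0" using insert.hyps by simp
  have iX: "i \<in> X" and iY: "i \<notin> Y" and I0X: "I0 \<subseteq> X" and I0Y: "I0 \<inter> Y = {}" using IXY by auto
  define E where "E = Y - X"
  define A where "A = X - insert i I0"
  define R where "R = Y \<union> insert i I0"
  have fE: "finite E" unfolding E_def using YB BG fG finite_subset by blast
  have AE: "A \<inter> E = {}" and ER: "E \<subseteq> R" and iA: "i \<notin> A" and iR: "i \<in> R" and iE: "i \<notin> E"
    unfolding A_def E_def R_def using iX by auto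
  have fin: "\<And>K. K \<subseteq> E \<Longrightarrow> A \<union> K \<in> B \<Longrightarrow> R - K \<in> B \<Longrightarrow> ?case"
  proof -
    fix K assume K: "K \<subseteq> E" "A \<union> K \<in> B" "R - K \<in> B"
    have "(X - insert i I0) \<union> K = A \<union> K" unfolding A_def ..
    moreover have "(Y - K) \<union> insert i I0 = R - K" unfolding R_def using K(1) IXY unfolding E_def by blast
    ultimately show ?case using K unfolding E_def by (intro exI[of _ K]) auto
  qed
  from mnD[OF mB XB YB iX iY]
  consider "X - {i} \<in> B" "insert i Y \<in> B"
    | j where "j \<in> Y - X" "insert j (X - {i}) \<in> B" "insert i Y - {j} \<in> B" by blast
  then show ?case
  proof cases
    case 1
    obtain J1 where J1: "J1 \<subseteq> insert i Y - X" "(X - I0) \<union> J1 \<in> B" "(insert i Y - J1) \<union> I0 \<in> B"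
      using IH[OF XB 1(2)] IXY iI0 by blast
    obtain J2 where J2: "J2 \<subseteq> Y - (X - {i})" "(X - {i} - I0) \<union> J2 \<in> B" "(Y - J2) \<union> I0 \<in> B"
      using IH[OF 1(1) YB] IXY iI0 by blast
    have J1E: "J1 \<subseteq> E" and J2E: "J2 \<subseteq> E" using J1(1) J2(1) iX iY unfolding E_def by auto
    have h1: "insert i (A \<union> J1) \<in> B"
    proof -
      have "insert i (A \<union> J1) = (X - I0) \<union> J1" unfolding A_def using iX iI0 by blast
      then show ?thesis using J1(2) by simp
    qed
    have h2: "R - ({} \<union> J1) \<in> B"
    proof -
      have "R - ({} \<union> J1) = (insert i Y - J1) \<union> I0" unfolding R_def using J1E IXY unfolding E_def by blast
      then show ?thesis using J1(3) by simp
    qed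
    have h3: "A \<union> ({} \<union> J2) \<in> B"
    proof -
      have "A \<union> ({} \<union> J2) = (X - {i} - I0) \<union> J2" unfolding A_def by blast
      then show ?thesis using J2(2) by simp
    qed
    have h4: "R - J2 - {i} \<in> B"
    proof -
      have "R - J2 - {i} = (Y - J2) \<union> I0" unfolding R_def using J2E IXY iI0 unfolding E_def by blast
      then show ?thesis using J2(3) by simp
    qed
    obtain K where "K \<subseteq> E" "A \<union> K \<in> B" "R - K \<in> B"
      using merge[OF mB fE AE ER iA iR iE _ J1E J2E _ _ h1 h2 h3 h4] by auto
    then show ?thesis using fin by blast
  next
    case (2 j)
    have jE: "j \<in> E" using 2(1) unfolding E_def .
    obtain J1 where J1: "J1 \<subseteq> (insert i Y - {j}) - X" "(X - I0) \<union> J1 \<in> B" "((insert i Y - {j}) - J1) \<union> I0 \<in> B"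
      using IH[OF XB 2(3)] IXY iI0 by blast
    obtain J2 where J2: "J2 \<subseteq> Y - insert j (X - {i})" "(insert j (X - {i}) - I0) \<union> J2 \<in> B" "(Y - J2) \<union> I0 \<in> B"
      using IH[OF 2(2) YB] IXY iI0 2(1) by blast
    have J1E: "J1 \<subseteq> E" "j \<notin> J1" and J2E: "J2 \<subseteq> E" "j \<notin> J2" using J1(1) J2(1) iX iY unfolding E_def by auto
    have h1: "insert i (A \<union> J1) \<in> B"
    proof -
      have "insert i (A \<union> J1) = (X - I0) \<union> J1" unfolding A_def using iX iI0 by blast
      then show ?thesis using J1(2) by simp
    qed
    have h2: "R - ({j} \<union> J1) \<in> B"
    proof -
      have "R - ({j} \<union> J1) = ((insert i Y - {j}) - J1) \<union> I0" unfolding R_def using J1E jE IXY unfolding E_def by blast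
      then show ?thesis using J1(3) by simp
    qed
    have h3: "A \<union> ({j} \<union> J2) \<in> B"
    proof -
      have "A \<union> ({j} \<union> J2) = (insert j (X - {i}) - I0) \<union> J2" unfolding A_def using jE IXY unfolding E_def by blast
      then show ?thesis using J2(2) by simp
    qed
    have h4: "R - J2 - {i} \<in> B"
    proof -
      have "R - J2 - {i} = (Y - J2) \<union> I0" unfolding R_def using J2E IXY iI0 unfolding E_def by blast
      then show ?thesis using J2(3) by simp
    qed
    obtain K where "K \<subseteq> E" "A \<union> K \<in> B" "R - K \<in> B"
      using merge[OF mB fE AE ER iA iR iE _ J1E(1) J2E(1) _ _ h1 h2 h3 h4] jE J1E J2E by auto
    then show ?thesis using fin by blast
  qed
qed

lemma argmax_pair:
  assumes vo: "valued_on N f" and X: "X \<in> argmax_f N f" and Y: "Y \<in> argmax_f N f"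
    and mreal: "f X \<noteq> - \<infinity>"
    and Z1: "Z1 \<subseteq> N" and Z2: "Z2 \<subseteq> N" and le: "f X + f Y \<le> f Z1 + f Z2"
  shows "Z1 \<in> argmax_f N f \<and> Z2 \<in> argmax_f N f"
proof -
  have XN: "X \<subseteq> N" and YN: "Y \<subseteq> N" using X Y unfolding argmax_f_def by auto
  have fXY: "f Y = f X" using X Y XN YN unfolding argmax_f_def by (auto intro: antisym)
  have z1: "f Z1 \<le> f X" and z2: "f Z2 \<le> f X" using X Z1 Z2 unfolding argmax_f_def by auto
  have nx: "f X \<noteq> \<infinity>" using vo XN unfolding valued_on_def by auto
  have n1: "f Z1 \<noteq> \<infinity>" and n2: "f Z2 \<noteq> \<infinity>" using vo Z1 Z2 unfolding valued_on_def by auto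
  obtain r where r: "f X = ereal r" using mreal nx by (cases "f X") auto
  have "f Z1 = f X \<and> f Z2 = f X"
  proof (cases "f Z1")
    case (real a)
    show ?thesis
    proof (cases "f Z2")
      case (real b)
      have "ereal (r + r) \<le> ereal (a + b)" using le r fXY \<open>f Z1 = ereal a\<close> real by simp
      then have h: "r + r \<le> a + b" by simp
      have "a \<le> r" "b \<le> r" using z1 z2 r \<open>f Z1 = ereal a\<close> real by simp_all
      then have "a = r" "b = r" using h by linarith+
      then show ?thesis using \<open>f Z1 = ereal a\<close> real r by simp
    next
      case PInf then show ?thesis using n2 by simp
    next
      case MInf
      have e1: "f X + f Y = ereal (r + r)" using r fXY by simp
      have e2: "f Z1 + f Z2 = - \<infinity>" using \<open>f Z1 = ereal a\<close> MInf by simp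
      have "ereal (r + r) \<le> - \<infinity>" using le unfolding e1 e2 .
      then show ?thesis by simp
    qed
  next
    case PInf then show ?thesis using n1 by simp
  next
    case MInf
    have e1: "f X + f Y = ereal (r + r)" using r fXY by simp
    have e2: "f Z1 + f Z2 = - \<infinity>" using MInf n2 by simp
    have "ereal (r + r) \<le> - \<infinity>" using le unfolding e1 e2 .
      then show ?thesis by simp
  qed
  then show ?thesis using X Z1 Z2 unfolding argmax_f_def by auto
qed

lemma argmax_mn:
  assumes fin: "finite N" and mc: "M_nat_concave N f"
  shows "mn (argmax_f N f)"
  unfolding mn_def
proof (intro ballI)
  fix X Y i assume X: "X \<in> argmax_f N f" and Y: "Y \<in> argmax_f N f" and i: "i \<in> X - Y"
  have vo: "valued_on N f" and dne: "dom_f N f \<noteq> {}" using mc unfolding M_nat_concave_def by auto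
  have XN: "X \<subseteq> N" and YN: "Y \<subseteq> N" using X Y unfolding argmax_f_def by auto
  obtain Z where Z: "Z \<subseteq> N" "f Z > - \<infinity>" using dne unfolding dom_f_def by auto
  have "f Z \<le> f X" using X Z unfolding argmax_f_def by auto
  then have mreal: "f X \<noteq> - \<infinity>" using Z by auto
  have ineq: "f X + f Y \<le> max (f (X - {i}) + f (insert i Y))
          (Sup ((\<lambda>j. f (insert j (X - {i})) + f (insert i Y - {j})) ` (Y - X)))"
    using mc XN YN i unfolding M_nat_concave_def by blast
  show "(X - {i} \<in> argmax_f N f \<and> insert i Y \<in> argmax_f N f) \<or>
     (\<exists>j\<in>Y - X. insert j (X - {i}) \<in> argmax_f N f \<and> insert i Y - {j} \<in> argmax_f N f)"
  proof (cases "f X + f Y \<le> f (X - {i}) + f (insert i Y)")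
    case True
    have "X - {i} \<subseteq> N" "insert i Y \<subseteq> N" using XN YN i by auto
    then show ?thesis using argmax_pair[OF vo X Y mreal _ _ True] by blast
  next
    case False
    let ?S = "(\<lambda>j. f (insert j (X - {i})) + f (insert i Y - {j})) ` (Y - X)"
    have le: "f X + f Y \<le> Sup ?S" using ineq False le_max_iff_disj by blast
    have nx: "f X \<noteq> \<infinity>" using vo XN unfolding valued_on_def by auto
    have fXY: "f Y = f X" using X Y XN YN unfolding argmax_f_def by (auto intro: antisym)
    obtain r where r: "f X = ereal r" using mreal nx by (cases "f X") auto
    have e1: "f X + f Y = ereal (r + r)" using r fXY by simp
    have ne: "Y - X \<noteq> {}"
    proof
      assume e: "Y - X = {}"
      have "?S = {}" unfolding e by simp
      then have "Sup ?S = Sup ({}::ereal set)" by (rule arg_cong)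
      also have "Sup ({}::ereal set) = - \<infinity>" by (simp add: bot_ereal_def)
      finally have "Sup ?S = - \<infinity>" .
      then have "ereal (r + r) \<le> - \<infinity>" using le unfolding e1 by simp
      then show False by simp
    qed
    have fYX: "finite (Y - X)" using YN fin finite_subset by blast
    have finS: "finite ?S" using fYX by (rule finite_imageI)
    have neS: "?S \<noteq> {}" using ne by blast
    have "Sup ?S \<in> ?S" using finS neS cSup_eq_Max[OF finS neS] Max_in[OF finS neS] by simp
    then obtain j where j: "j \<in> Y - X" "Sup ?S = f (insert j (X - {i})) + f (insert i Y - {j})" by blast
    have Z: "insert j (X - {i}) \<subseteq> N" "insert i Y - {j} \<subseteq> N" using XN YN i j by auto
    have le2: "f X + f Y \<le> f (insert j (X - {i})) + f (insert i Y - {j})" using le unfolding j(2) .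
    show ?thesis using argmax_pair[OF vo X Y mreal Z le2] j(1) by blast
  qed
qed

theorem theorem2:
  fixes N :: "'a set" and f :: "'a set \<Rightarrow> ereal"
  assumes "finite N"
    and "M_nat_concave N f"
    and "X \<in> argmax_f N f" and "Y \<in> argmax_f N f"
    and "I \<subseteq> X - Y"
  shows "\<exists>J. J \<subseteq> Y - X \<and> (X - I) \<union> J \<in> argmax_f N f \<and> (Y - J) \<union> I \<in> argmax_f N f"
proof -
  have BN: "argmax_f N f \<subseteq> Pow N" unfolding argmax_f_def by auto
  have XN: "X \<subseteq> N" using assms(3) unfolding argmax_f_def by simp
  have IN: "I \<subseteq> N" using assms(5) XN by blast
  have fI: "finite I" using finite_subset[OF IN assms(1)] .
  obtain J where J: "J \<subseteq> Y - X" "(X - I) \<union> J \<in> argmax_f N f" "(Y - J) \<union> I \<in> argmax_f N f"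
    using main_mn[OF fI assms(1) BN argmax_mn[OF assms(1,2)] assms(3,4,5)] by blast
  show ?thesis using J by (intro exI[of _ J]) simp
qed

end
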